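(* Let $a,b$ be integers with $0<b<a$, let $S=\langle a,a+1,\ldots,a+b\rangle$ with conductor $c$, and let $m\ge 2c-1$. Let $r$ be a positive integer, let $\mathrm h(r)$ be the unique integer $q$ with $q+\frac12 bq(q-1)\le r<1+q+\frac12 bq(q+1)$, and write $r=\mathrm h(r)+\frac12 b\mathrm h(r)(\mathrm h(r)-1)+k\mathrm h(r)+j$ with integers $-1\le k\le b-1$ and $0<j\le\mathrm h(r)$ (with $k=-1$ only when $r=\mathrm h(r)+\frac12 b\mathrm h(r)(\mathrm h(r)-1)$, and then $j=\mathrm h(r)$). If $M$ is an ordered $(S,m,r)$-amenable set, then $\sharp(M\cap[m,m+a+b))=(\mathrm h(r)-1)b+k+2$.
   Context: For $x\in S$, $\mathrm D(x)=\{\alpha\in S\mid x-\alpha\in S\}$. A set $M=\{m_1<\cdots<m_r\}\subseteq S$ with $2c-1\le m=m_1$ is $(S,m,r)$-amenable if $\mathrm D(m_i)\cap[m,\infty)\subseteq M$ for all $i$. The ground is $\{m,m+1,\ldots,m+a+b-1\}$, and the shadow of $M$ is $M\cap\{m,\ldots,m+a+b-1\}$. For a finite $M\subseteq S\cap[m,\infty)$, let $J$ be the set of $j\in\{0,\ldots,a-1\}$ such that $x-(m+b)=qa+j$ for some $x\in M$ and some integer $q\ge 0$; if $J\neq\emptyset$ let $j_0=\max J$ and let the wagon of $M$ be $W=\{x\in M\mid x-(m+b)=qa+j_0\text{ for some integer }q\}$. An element $P\in M$ is the pivot of $M$ if either $P<m+b$ and $P=\max M$, or $P=\max W$. An $(S,m,r)$-amenable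 set $M$ with pivot $P$ is ordered amenable if (i) its shadow is $\{m,m+1,\ldots,m+t\}$ for some integer $0\le t<a+b-1$, and (ii) whenever $s\in S\setminus M$ is such that $M\cup\{s\}$ is $(S,m,r+1)$-amenable with the same shadow as $M$, we have $s=P+a$. *)

theory Defs
  imports Main
begin

inductive_set gen_semigroup :: "nat set \<Rightarrow> nat set" for G where
  zero: "0 \<in> gen_semigroup G"
| add: "x \<in> gen_semigroup G \<Longrightarrow> g \<in> G \<Longrightarrow> x + g \<in> gen_semigroup G"

definition Ssg :: "nat \<Rightarrow> nat \<Rightarrow> nat set" where
  "Ssg a b = gen_semigroup {a..a+b}"

definition conductor :: "nat set \<Rightarrow> nat" where
  "conductor S = (LEAST c. \<forall>n\<ge>c. n \<in> S)"

definition Dset :: "nat set \<Rightarrow> nat \<Rightarrow> nat set" where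
  "Dset S x = {\<alpha> \<in> S. \<alpha> \<le> x \<and> x - \<alpha> \<in> S}"

definition amenable :: "nat set \<Rightarrow> nat \<Rightarrow> nat \<Rightarrow> nat set \<Rightarrow> bool" where
  "amenable S m r M \<longleftrightarrow>
     finite M \<and> card M = r \<and> M \<subseteq> S \<and> m \<in> M \<and> (\<forall>x\<in>M. m \<le> x) \<and>
     2 * conductor S \<le> m + 1 \<and>
     (\<forall>x\<in>M. \<forall>\<alpha>\<in>Dset S x. m \<le> \<alpha> \<longrightarrow> \<alpha> \<in> M)"

definition shadow :: "nat \<Rightarrow> nat \<Rightarrow> nat \<Rightarrow> nat set \<Rightarrow> nat set" where
  "shadow a b m M = M \<inter> {m..<m+a+b}"

definition wagonJ :: "nat \<Rightarrow> nat \<Rightarrow> nat \<Rightarrow> nat set \<Rightarrow> nat set" where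
  "wagonJ a b m M = {j. j < a \<and> (\<exists>x\<in>M. \<exists>q::nat. x = m + b + q * a + j)}"

definition wagon :: "nat \<Rightarrow> nat \<Rightarrow> nat \<Rightarrow> nat set \<Rightarrow> nat set" where
  "wagon a b m M = {x \<in> M. \<exists>q::int. int x - int (m + b) = q * int a + int (Max (wagonJ a b m M))}"

definition is_pivot :: "nat \<Rightarrow> nat \<Rightarrow> nat \<Rightarrow> nat set \<Rightarrow> nat \<Rightarrow> bool" where
  "is_pivot a b m M P \<longleftrightarrow> P \<in> M \<and>
     ((P < m + b \<and> P = Max M) \<or>
      (wagonJ a b m M \<noteq> {} \<and> P = Max (wagon a b m M)))"

definition ordered_amenable :: "nat \<Rightarrow> nat \<Rightarrow> nat set \<Rightarrow> nat \<Rightarrow> nat \<Rightarrow> nat set \<Rightarrow> bool" where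
  "ordered_amenable a b S m r M \<longleftrightarrow>
     amenable S m r M \<and>
     (\<exists>P. is_pivot a b m M P \<and>
        (\<exists>t. t + 1 < a + b \<and> shadow a b m M = {m..m+t}) \<and>
        (\<forall>s \<in> S - M. amenable S m (r + 1) (insert s M) \<and>
             shadow a b m (insert s M) = shadow a b m M \<longrightarrow> s = P + a))"

definition hfun :: "nat \<Rightarrow> nat \<Rightarrow> int" where
  "hfun b r = (THE q::int. q + int b * q * (q - 1) div 2 \<le> int r \<and>
                           int r < 1 + q + int b * q * (q + 1) div 2)"

end

theory Submission
  imports Defs
begin


lemma Ssg_char: "Ssg a b = {n. \<exists>p. p*a \<le> n \<and> n \<le> p*(a+b)}"
proof
  show "Ssg a b \<subseteq> {n. \<exists>p. p*a \<le> n \<and> n \<le> p*(a+b)}"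
    unfolding Ssg_def
  proof
    fix x assume "x \<in> gen_semigroup {a..a+b}"
    then show "x \<in> {n. \<exists>p. p*a \<le> n \<and> n \<le> p*(a+b)}"
    proof induction
      case zero then show ?case by auto
    next
      case (add x g)
      then obtain p where "p*a \<le> x" "x \<le> p*(a+b)" by auto
      moreover have "a \<le> g" "g \<le> a+b" using add by auto
      ultimately have "Suc p * a \<le> x+g" "x + g \<le> Suc p*(a+b)" by auto
      then show ?case by blast
    qed
  qed
next
  show "{n. \<exists>p. p*a \<le> n \<and> n \<le> p*(a+b)} \<subseteq> Ssg a b"
  proof
    fix n assume "n \<in> {n. \<exists>p. p*a \<le> n \<and> n \<le> p*(a+b)}"
    then obtain p where "p*a \<le> n" "n \<le> p*(a+b)" by auto
    then show "n \<in> Ssg a b"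
    proof (induction p arbitrary: n)
      case 0 then show ?case by (simp add: Ssg_def gen_semigroup.zero)
    next
      case (Suc p)
      define g where "g = a + min b (n - Suc p * a)"
      have g: "g \<in> {a..a+b}" unfolding g_def by auto
      have "p*a \<le> n - g" "n - g \<le> p*(a+b)" using Suc.prems unfolding g_def by (auto simp: min_def algebra_simps)
      then have "n - g \<in> Ssg a b" using Suc.IH by blast
      moreover have "n = (n - g) + g" using Suc.prems unfolding g_def by (auto simp: min_def algebra_simps)
      ultimately show ?case using g unfolding Ssg_def by (metis gen_semigroup.add)
    qed
  qed
qed

lemma conductor_prop:
  assumes "0 < b" "0 < a"
  shows "\<forall>n\<ge>conductor (Ssg a b). n \<in> Ssg a b"
proof -
  have "\<forall>n\<ge>a*a. n \<in> Ssg a b"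
  proof (intro allI impI)
    fix n assume n: "a*a \<le> n"
    define p where "p = n div a"
    have "p * a \<le> n" unfolding p_def by (metis div_mult_mod_eq le_add1)
    have pa: "a \<le> p" unfolding p_def using n assms
      by (metis div_le_mono nonzero_mult_div_cancel_right not_gr0)
    have "n = p*a + n mod a" unfolding p_def by simp
    moreover have "n mod a < a" using assms by simp
    moreover have "a \<le> p*b" using pa assms by (metis le_trans mult.right_neutral mult_le_mono2 Suc_leI One_nat_def)
    ultimately have "n \<le> p*(a+b)" by (simp add: algebra_simps)
    then show "n \<in> Ssg a b" using \<open>p*a \<le> n\<close> Ssg_char by blast
  qed
  then show ?thesis unfolding conductor_def by (rule LeastI)
qed




definition Tc :: "nat \<Rightarrow> nat \<Rightarrow> nat \<Rightarrow> nat set" where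
  "Tc a b n = {x. \<exists>q. q*(a+b) \<le> x \<and> x < q*a + n}"

lemma Tc_down:
  assumes "y \<in> Tc a b n" "d \<in> Ssg a b" "d \<le> y"
  shows "y - d \<in> Tc a b n"
proof -
  obtain q where q: "q*(a+b) \<le> y" "y < q*a + n" using assms(1) unfolding Tc_def by auto
  obtain p where p: "p*a \<le> d" "d \<le> p*(a+b)" using assms(2) Ssg_char by blast
  show ?thesis
  proof (cases "p \<le> q")
    case True
    then obtain e where e: "q = p + e" using le_Suc_ex by blast
    have "e*(a+b) \<le> y - d" using q p e by (auto simp: algebra_simps)
    moreover have "y - d < e*a + n" using q p e assms(3) by (auto simp: algebra_simps)
    ultimately show ?thesis unfolding Tc_def by blast
  next
    case False
    then have "q*a \<le> p*a" by simp
    then have "y - d < 0*a + n" using q p assms(3) by linarith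
    then have "0*(a+b) \<le> y - d \<and> y - d < 0*a+n" by simp
    then show ?thesis unfolding Tc_def by blast
  qed
qed

lemma Tc_up:
  assumes "a + b \<le> y" "\<And>g. a \<le> g \<Longrightarrow> g \<le> a+b \<Longrightarrow> y - g \<in> Tc a b n" "n < a + b"
  shows "y \<in> Tc a b n"
proof -
  obtain q where q: "q*(a+b) \<le> y - (a+b)" "y - (a+b) < q*a + n" using assms(2)[of "a+b"] unfolding Tc_def by auto
  show ?thesis
  proof (cases "y - a < q*a + n")
    case True
    have "Suc q*(a+b) \<le> y" "y < Suc q * a + n" using q True assms(1) by auto
    then show ?thesis unfolding Tc_def by blast
  next
    case False
    define g where "g = y - (q*a+n)"
    have "a \<le> g" "g \<le> a+b" using False q unfolding g_def by auto
    then have "y - g \<in> Tc a b n" using assms(2) by blast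
    moreover have "y - g = q*a+n" using False unfolding g_def by auto
    ultimately obtain q' where q': "q'*(a+b) \<le> q*a+n" "q*a+n < q'*a + n" unfolding Tc_def by auto
    then have "q < q'" by simp
    then have "Suc q*(a+b) \<le> q'*(a+b)" by (meson Suc_leI mult_le_mono1)
    moreover have "q*a + n < Suc q*(a+b)" using assms(3) by (simp add: algebra_simps)
    ultimately show ?thesis using q' by linarith
  qed
qed

lemma Tc_finite:
  assumes "0 < b" shows "finite (Tc a b n)"
proof -
  have "Tc a b n \<subseteq> {..< n*a + n}"
  proof
    fix x assume "x \<in> Tc a b n"
    then obtain q where q: "q*(a+b) \<le> x" "x < q*a + n" unfolding Tc_def by auto
    then have "q*b < n" by (simp add: algebra_simps)
    moreover have "q \<le> q*b" using assms by simp
    ultimately have "q \<le> n" by linarith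
    then have "q*a \<le> n*a" by (rule mult_le_mono1)
    then show "x \<in> {..< n*a + n}" using q(2) by (simp only: lessThan_iff)
  qed
  then show ?thesis using finite_subset by blast
qed

lemma Tc_mono: "n \<le> n' \<Longrightarrow> Tc a b n \<subseteq> Tc a b n'"
  unfolding Tc_def by fastforce

lemma Tc_Suc:
  assumes "0 < a" "0 < b" "n < a + b"
  shows "card (Tc a b (Suc n)) = card (Tc a b n) + (n div b + 1)"
proof -
  define C where "C = (\<lambda>q. q*a + n) ` {..n div b}"
  have eq: "Tc a b (Suc n) = Tc a b n \<union> C"
  proof
    show "Tc a b (Suc n) \<subseteq> Tc a b n \<union> C"
    proof
      fix x assume "x \<in> Tc a b (Suc n)"
      then obtain q where q: "q*(a+b) \<le> x" "x < q*a + Suc n" unfolding Tc_def by auto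
      show "x \<in> Tc a b n \<union> C"
      proof (cases "x < q*a+n")
        case True then show ?thesis using q unfolding Tc_def by auto
      next
        case False
        then have x: "x = q*a+n" using q by simp
        then have "q*b \<le> n" using q by (simp add: algebra_simps)
        then have "q \<le> n div b" using assms by (simp add: less_eq_div_iff_mult_less_eq)
        then show ?thesis unfolding C_def using x by blast
      qed
    qed
  next
    show "Tc a b n \<union> C \<subseteq> Tc a b (Suc n)"
    proof
      fix x assume "x \<in> Tc a b n \<union> C"
      then show "x \<in> Tc a b (Suc n)"
      proof
        assume "x \<in> Tc a b n" then show ?thesis using Tc_mono[of n "Suc n"] by auto
      next
        assume "x \<in> C"
        then obtain q where x: "x = q*a+n" "q \<le> n div b" unfolding C_def by auto
        then have "q*b \<le> n" using assms by (simp add: less_eq_div_iff_mult_less_eq)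
        then have "q*(a+b) \<le> x" "x < q*a + Suc n" using x by (auto simp: algebra_simps)
        then show ?thesis unfolding Tc_def by blast
      qed
    qed
  qed
  have disj: "Tc a b n \<inter> C = {}"
  proof (rule ccontr)
    assume "Tc a b n \<inter> C \<noteq> {}"
    then obtain q where "q*a + n \<in> Tc a b n" unfolding C_def by auto
    then obtain q' where q': "q'*(a+b) \<le> q*a+n" "q*a+n < q'*a + n" unfolding Tc_def by auto
    then have "q < q'" by simp
    then have "Suc q*(a+b) \<le> q'*(a+b)" by (meson Suc_leI mult_le_mono1)
    moreover have "q*a + n < Suc q*(a+b)" using assms(3) by (simp add: algebra_simps)
    ultimately show False using q' by linarith
  qed
  have "inj_on (\<lambda>q. q*a + n) {..n div b}" using assms(1) by (auto simp: inj_on_def)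
  then have "card C = n div b + 1" unfolding C_def by (simp add: card_image)
  moreover have "finite C" unfolding C_def by simp
  ultimately show ?thesis using eq disj Tc_finite[OF assms(2)] by (simp add: card_Un_disjoint)
qed

definition St :: "nat \<Rightarrow> nat \<Rightarrow> nat" where
  "St b n = (\<Sum>c<n. c div b + 1)"

lemma card_Tc:
  assumes "0 < a" "0 < b" "n \<le> a + b"
  shows "card (Tc a b n) = St b n"
  using assms
proof (induction n)
  case 0
  have "Tc a b 0 = {}"
  proof -
    { fix x q assume "q*(a+b) \<le> x" "x < q*a + 0"
      then have False by (simp add: algebra_simps) }
    then show ?thesis unfolding Tc_def by blast
  qed
  then show ?case by (simp add: St_def)
next
  case (Suc n) then show ?case using Tc_Suc[of a b n] by (simp add: St_def)
qed

lemma St_strict: "strict_mono (St b)"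
  unfolding strict_mono_Suc_iff by (simp add: St_def)

lemma St_A:
  assumes "0 < b" "e \<le> b"
  shows "St b (h*b + e) = St b (h*b) + e*(h+1)"
  using assms
proof (induction e)
  case 0 then show ?case by simp
next
  case (Suc e)
  have "(h*b + e) div b = h" using Suc by (simp add: div_add1_eq) 
  then show ?case using Suc by (simp add: St_def)
qed

lemma St_B:
  assumes "0 < b"
  shows "2 * St b (h*b) = b*h*(h+1)"
proof (induction h)
  case 0 then show ?case by (simp add: St_def)
next
  case (Suc h)
  have "St b (Suc h * b) = St b (h*b) + b*(h+1)" using St_A[OF assms, of b h] by (simp add: algebra_simps)
  then show ?case using Suc by (simp add: algebra_simps)
qed




lemma St_Suc: "St b (Suc n) = St b n + (n div b + 1)" by (simp add: St_def)

lemma int_small: "(X::int) * A = Y \<Longrightarrow> -A < Y \<Longrightarrow> Y < 0 \<Longrightarrow> False"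
proof -
  assume h: "X * A = Y" "-A < Y" "Y < 0"
  then have A: "0 < A" by linarith
  show False
  proof (cases "0 \<le> X")
    case True then have "0 \<le> X*A" using A by simp
    then show False using h by linarith
  next
    case False then have "X \<le> -1" by linarith
    then have "X*A \<le> -1*A" using A by (intro mult_right_mono) auto
    then show False using h by linarith
  qed
qed

lemma arith_final:
  fixes b h e r :: nat and H k j :: int
  assumes "0 < b" "e \<le> b" "H = int h + 1" "k = int e - 1"
    and "int r = H + int b * H * (H - 1) div 2 + k * H + j"
    and "0 < j" "j \<le> H"
  shows "St b (h*b+e) < r \<and> r \<le> St b (Suc (h*b+e))"
proof -
  have ev: "even (H*(H-1))" by simp
  have d2: "int b * H * (H - 1) div 2 * 2 = int b * H * (H - 1)"
    using ev by (metis dvd_div_mult_self dvd_mult mult.assoc)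
  have r2: "2 * int r = 2*H + int b * H * (H - 1) + 2*k*H + 2*j" using assms(5) d2 by linarith
  have s1: "St b (h*b+e) = St b (h*b) + e*(h+1)" by (rule St_A[OF assms(1,2)])
  have s2: "2 * St b (h*b) = b*h*(h+1)" by (rule St_B[OF assms(1)])
  have "2 * int (St b (h*b+e)) = int b * int h * (int h + 1) + 2 * int e * (int h + 1)"
    using s1 s2 by (metis (mono_tags, lifting) of_nat_add of_nat_mult of_nat_1 distrib_left of_nat_numeral mult.assoc)
  also have "\<dots> = 2*int r - 2*j" using r2 assms(3,4) by (simp add: algebra_simps)
  finally have A: "int (St b (h*b+e)) = int r - j" by linarith
  have "h \<le> (h*b+e) div b" using assms(1) by (metis div_le_mono div_mult_self_is_m le_add1)
  then have "St b (h*b+e) + h + 1 \<le> St b (Suc (h*b+e))" by (simp add: St_Suc)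
  then show ?thesis using A assms(3,6,7) by linarith
qed




theorem corollary4p19:
  fixes a b m r :: nat and k j :: int and M :: "nat set"
  assumes "0 < b" and "b < a"
    and "2 * conductor (Ssg a b) \<le> m + 1"
    and "0 < r"
    and "int r = hfun b r + int b * hfun b r * (hfun b r - 1) div 2 + k * hfun b r + j"
    and "-1 \<le> k" and "k \<le> int b - 1"
    and "0 < j" and "j \<le> hfun b r"
    and "ordered_amenable a b (Ssg a b) m r M"
  shows "int (card (M \<inter> {m..<m+a+b})) = (hfun b r - 1) * int b + k + 2"
proof -
  let ?S = "Ssg a b"
  have a0: "0 < a" using assms(1,2) by simp
  have cond: "\<forall>n\<ge>conductor ?S. n \<in> ?S" by (rule conductor_prop) (use assms(1,2) in auto)
  have cm: "conductor ?S \<le> m" using assms(3) by linarith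
  have inS: "\<And>n. m \<le> n \<Longrightarrow> n \<in> ?S" using cond cm by auto
  have oa: "amenable ?S m r M \<and> (\<exists>P. is_pivot a b m M P \<and>
        (\<exists>t. t + 1 < a + b \<and> shadow a b m M = {m..m+t}) \<and>
        (\<forall>s \<in> ?S - M. amenable ?S m (r + 1) (insert s M) \<and>
             shadow a b m (insert s M) = shadow a b m M \<longrightarrow> s = P + a))"
    using assms(10) unfolding ordered_amenable_def .
  then have am: "amenable ?S m r M" by (rule conjunct1)
  from oa have "\<exists>P. is_pivot a b m M P \<and>
        (\<exists>t. t + 1 < a + b \<and> shadow a b m M = {m..m+t}) \<and>
        (\<forall>s \<in> ?S - M. amenable ?S m (r + 1) (insert s M) \<and>
             shadow a b m (insert s M) = shadow a b m M \<longrightarrow> s = P + a)" by (rule conjunct2)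
  then obtain P where P: "is_pivot a b m M P \<and>
        (\<exists>t. t + 1 < a + b \<and> shadow a b m M = {m..m+t}) \<and>
        (\<forall>s \<in> ?S - M. amenable ?S m (r + 1) (insert s M) \<and>
             shadow a b m (insert s M) = shadow a b m M \<longrightarrow> s = P + a)" ..
  from P have piv: "is_pivot a b m M P" by (rule conjunct1)
  from P have P2: "(\<exists>t. t + 1 < a + b \<and> shadow a b m M = {m..m+t}) \<and>
        (\<forall>s \<in> ?S - M. amenable ?S m (r + 1) (insert s M) \<and>
             shadow a b m (insert s M) = shadow a b m M \<longrightarrow> s = P + a)" by (rule conjunct2)
  from P2 have ii: "\<forall>s \<in> ?S - M. amenable ?S m (r + 1) (insert s M) \<and>
             shadow a b m (insert s M) = shadow a b m M \<longrightarrow> s = P + a" by (rule conjunct2)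
  from P2 have "\<exists>t. t + 1 < a + b \<and> shadow a b m M = {m..m+t}" by (rule conjunct1)
  then obtain t where tt: "t + 1 < a + b \<and> shadow a b m M = {m..m+t}" ..
  from tt have t: "t + 1 < a+b" "shadow a b m M = {m..m+t}" by simp_all
  have tba: "t - b < a" using t(1) a0 by arith
  have am': "finite M \<and> card M = r \<and> M \<subseteq> ?S \<and> m \<in> M \<and> (\<forall>x\<in>M. m \<le> x) \<and>
     2 * conductor ?S \<le> m + 1 \<and>
     (\<forall>x\<in>M. \<forall>\<alpha>\<in>Dset ?S x. m \<le> \<alpha> \<longrightarrow> \<alpha> \<in> M)" using am unfolding amenable_def .
  from am' have fin: "finite M" by (elim conjE) assumption
  from am' have cardM: "card M = r" by (elim conjE) assumption
  from am' have MS: "M \<subseteq> ?S" by (elim conjE) assumption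
  from am' have mM: "m \<in> M" by (elim conjE) assumption
  from am' have ge: "\<forall>x\<in>M. m \<le> x" by (elim conjE) assumption
  from am' have cl: "\<forall>x\<in>M. \<forall>\<alpha>\<in>Dset ?S x. m \<le> \<alpha> \<longrightarrow> \<alpha> \<in> M" by (elim conjE) assumption
  have clos: "\<And>x \<alpha>. x \<in> M \<Longrightarrow> m \<le> \<alpha> \<Longrightarrow> \<alpha> \<le> x \<Longrightarrow> x - \<alpha> \<in> ?S \<Longrightarrow> \<alpha> \<in> M"
    using cl inS unfolding Dset_def by auto
  have sh: "\<And>x. x \<in> M \<Longrightarrow> x < m+a+b \<Longrightarrow> x \<le> m+t"
  proof -
    fix x assume "x \<in> M" "x < m+a+b"
    then have "x \<in> shadow a b m M" using ge unfolding shadow_def by auto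
    then show "x \<le> m+t" using t(2) by simp
  qed
  have sh2: "\<And>x. m \<le> x \<Longrightarrow> x \<le> m+t \<Longrightarrow> x \<in> M"
  proof -
    fix x assume "m \<le> x" "x \<le> m+t"
    then have "x \<in> shadow a b m M" using t by auto
    then show "x \<in> M" unfolding shadow_def by auto
  qed
  have up: "\<forall>x\<in>M. x - m \<in> Tc a b (t+1)"
  proof -
    { fix x have "x \<in> M \<Longrightarrow> x - m \<in> Tc a b (t+1)"
      proof (induction x rule: less_induct)
        case (less x)
        show ?case
        proof (cases "x < m+a+b")
          case True
          then have "x \<le> m+t" using sh less.prems by auto
          then have "0*(a+b) \<le> x - m \<and> x - m < 0*a + (t+1)" by simp
          then show ?thesis unfolding Tc_def by blast
        next
          case False
          show ?thesis
          proof (rule Tc_up)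
            show "a+b \<le> x - m" using False by simp
            show "t+1 < a+b" using t by simp
            fix g assume g: "a \<le> g" "g \<le> a+b"
            have "1*a \<le> g \<and> g \<le> 1*(a+b)" using g by simp
            then have gS: "g \<in> ?S" using Ssg_char by blast
            have "x - g \<in> M" using clos[OF less.prems, of "x-g"] False g gS by simp
            moreover have "x - g < x" using g a0 False by simp
            ultimately have "x - g - m \<in> Tc a b (t+1)" using less.IH by blast
            then show "x - m - g \<in> Tc a b (t+1)" by (simp add: diff_commute add.commute)
          qed
        qed
      qed }
    then show ?thesis by blast
  qed
  have low: "\<forall>y\<in>Tc a b t. m + y \<in> M"
  proof (rule ccontr)
    assume "\<not> ?thesis"
    then obtain y1 where y1: "y1 \<in> Tc a b t \<and> m+y1 \<notin> M" by auto
    define y0 where "y0 = (LEAST y. y \<in> Tc a b t \<and> m + y \<notin> M)"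
    have y0: "y0 \<in> Tc a b t" "m + y0 \<notin> M"
      using LeastI[of "\<lambda>y. y \<in> Tc a b t \<and> m+y \<notin> M", OF y1] unfolding y0_def by auto
    have ymin: "\<And>z. z < y0 \<Longrightarrow> z \<in> Tc a b t \<Longrightarrow> m + z \<in> M"
      using not_less_Least unfolding y0_def by blast
    obtain q where q: "q*(a+b) \<le> y0" "y0 < q*a + t" using y0 unfolding Tc_def by auto
    have q1: "1 \<le> q"
    proof (rule ccontr)
      assume "\<not> 1 \<le> q"
      then have "q = 0" by simp
      then have "y0 < t" using q by simp
      then have "m + y0 \<in> M" using sh2 by simp
      then show False using y0 by simp
    qed
    have "1*(a+b) \<le> q*(a+b)" using q1 by (rule mult_le_mono1)
    then have "a+b \<le> q*(a+b)" by (simp only: mult_1)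
    then have yab: "a+b \<le> y0" using q(1) by (rule le_trans)
    have "q*b < t" using q by (simp add: algebra_simps)
    moreover have "b \<le> q*b" using q1 by simp
    ultimately have bt: "b < t" by linarith
    define s where "s = m + y0"
    have sS: "s \<in> ?S - M" using inS y0 unfolding s_def by auto
    have ams: "amenable ?S m (r+1) (insert s M)"
      unfolding amenable_def
    proof (intro conjI)
      show "finite (insert s M)" using fin by simp
      show "card (insert s M) = r + 1" using fin sS cardM by simp
      show "insert s M \<subseteq> ?S" using MS sS by auto
      show "m \<in> insert s M" using mM by simp
      show "\<forall>x\<in>insert s M. m \<le> x" using ge s_def by auto
      show "2 * conductor ?S \<le> m + 1" using assms(3) .
      show "\<forall>x\<in>insert s M. \<forall>\<alpha>\<in>Dset ?S x. m \<le> \<alpha> \<longrightarrow> \<alpha> \<in> insert s M"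
      proof (intro ballI impI)
        fix x \<alpha> assume x: "x \<in> insert s M" and al: "\<alpha> \<in> Dset ?S x" and ma: "m \<le> \<alpha>"
        show "\<alpha> \<in> insert s M"
        proof (cases "x \<in> M")
          case True then show ?thesis using cl al ma by auto
        next
          case False
          then have xs: "x = s" using x by simp
          have al2: "\<alpha> \<le> s" "s - \<alpha> \<in> ?S" using al xs unfolding Dset_def by auto
          show ?thesis
          proof (cases "\<alpha> = s")
            case True then show ?thesis by simp
          next
            case False
            have "s - \<alpha> \<le> y0" using ma unfolding s_def by simp
            then have "y0 - (s - \<alpha>) \<in> Tc a b t" using Tc_down[OF y0(1) al2(2)] by simp
            moreover have "y0 - (s - \<alpha>) = \<alpha> - m" using ma al2 unfolding s_def by simp
            moreover have "\<alpha> - m < y0" using False al2 ma unfolding s_def by simp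
            ultimately have "m + (\<alpha> - m) \<in> M" using ymin by simp
            then show ?thesis using ma by simp
          qed
        qed
      qed
    qed
    have shs: "shadow a b m (insert s M) = shadow a b m M"
      unfolding shadow_def using yab s_def by auto
    have sP: "s = P + a" using ii sS ams shs by blast
    from piv have PM: "P \<in> M" and
      pc: "(P < m + b \<and> P = Max M) \<or> (wagonJ a b m M \<noteq> {} \<and> P = Max (wagon a b m M))"
      unfolding is_pivot_def by auto
    show False
    proof (cases "P < m+b")
      case True then show False using sP yab s_def by simp
    next
      case False
      then have wJ: "wagonJ a b m M \<noteq> {}" and PW: "P = Max (wagon a b m M)" using pc by auto
      define j0 where "j0 = Max (wagonJ a b m M)"
      have finJ: "finite (wagonJ a b m M)"
        by (rule finite_subset[of _ "{..<a}"]) (auto simp: wagonJ_def)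
      have j0J: "j0 \<in> wagonJ a b m M" using Max_in[OF finJ wJ] j0_def by simp
      then obtain x0 q0 where x0: "x0 \<in> M" "x0 = m+b+q0*a+j0" unfolding wagonJ_def by auto
      have "int x0 - int (m+b) = int q0 * int a + int j0" using x0 by simp
      then have "x0 \<in> wagon a b m M" unfolding wagon_def j0_def using x0 by blast
      then have wne: "wagon a b m M \<noteq> {}" by auto
      have finW: "finite (wagon a b m M)"
        by (rule finite_subset[OF _ fin]) (auto simp: wagon_def)
      have "P \<in> wagon a b m M" using PW Max_in[OF finW wne] by simp
      then obtain qq :: int where qq: "int P - int (m+b) = qq * int a + int j0"
        unfolding wagon_def j0_def by auto
      have "m + t = m + b + 0*a + (t - b)" using bt by simp
      moreover have "m + t \<in> M" using sh2 by simp
      moreover have "t - b < a" by (rule tba)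
      ultimately have "t - b \<in> wagonJ a b m M" unfolding wagonJ_def by blast
      then have tbj: "t - b \<le> j0" using Max_ge[OF finJ] j0_def by simp
      have j0a: "j0 < a" using j0J unfolding wagonJ_def by simp
      define e where "e = int P - int (m+b) - (int q - 1) * int a"
      have Pe: "int P = int m + int y0 - int a" using sP s_def by simp
      have qab: "int q * (int a + int b) \<le> int y0" using q(1) by (metis of_nat_add of_nat_le_iff of_nat_mult)
      have qat: "int y0 < int q * int a + int t" using q(2) by (metis of_nat_add of_nat_less_iff of_nat_mult)
      have "int b \<le> int q * int b" using \<open>b \<le> q*b\<close> by (metis of_nat_le_iff of_nat_mult)
      then have e0: "0 \<le> e" unfolding e_def using Pe qab by (simp add: algebra_simps)
      have e1: "e < int t - int b" unfolding e_def using Pe qat by (simp add: algebra_simps)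
      have "(qq - (int q - 1)) * int a = e - int j0" unfolding e_def using qq by (simp add: algebra_simps)
      moreover have "- int a < e - int j0" using e0 j0a by simp
      moreover have "e - int j0 < 0" using e1 tbj bt by linarith
      ultimately show False by (rule int_small)
    qed
  qed
  have inj: "inj_on (\<lambda>x. x - m) M"
  proof (rule inj_onI)
    fix x y assume "x \<in> M" "y \<in> M" "x - m = y - m"
    moreover have "m \<le> x" "m \<le> y" using ge \<open>x \<in> M\<close> \<open>y \<in> M\<close> by auto
    ultimately show "x = y" by arith
  qed
  have fT: "\<And>n. finite (Tc a b n)" using Tc_finite assms(1) by blast
  have "r = card ((\<lambda>x. x - m) ` M)" using cardM card_image[OF inj] by simp
  also have "\<dots> \<le> card (Tc a b (t+1))" using up by (intro card_mono[OF fT]) auto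
  finally have r1: "r \<le> card (Tc a b (t+1))" .
  have tnot: "m + t \<notin> (\<lambda>y. m + y) ` Tc a b t"
  proof
    assume "m + t \<in> (\<lambda>y. m + y) ` Tc a b t"
    then have "t \<in> Tc a b t" by auto
    then obtain q where q: "q*(a+b) \<le> t" "t < q*a + t" unfolding Tc_def by auto
    then have "1 \<le> q" by (cases q) auto
    then have "1*(a+b) \<le> q*(a+b)" by (rule mult_le_mono1)
    then have "a+b \<le> q*(a+b)" by (simp only: mult_1)
    then show False using q(1) t(1) by linarith
  qed
  have "card (Tc a b t) + 1 = card (insert (m+t) ((\<lambda>y. m + y) ` Tc a b t))"
    using tnot fT by (simp add: card_image)
  also have "\<dots> \<le> card M" using low sh2 fin by (intro card_mono) auto
  finally have r2: "card (Tc a b t) + 1 \<le> r" using cardM by simp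
  have Stt: "St b t < r" "r \<le> St b (Suc t)"
    using r1 r2 card_Tc[OF a0 assms(1), of t] card_Tc[OF a0 assms(1), of "t+1"] t by auto
  define H where "H = hfun b r"
  have H1: "1 \<le> H" using assms(8,9) H_def by simp
  define h where "h = nat (H - 1)"
  define e where "e = nat (k + 1)"
  have Hh: "H = int h + 1" using H1 h_def by simp
  have ke: "k = int e - 1" using assms(6) e_def by simp
  have eb: "e \<le> b" using assms(7) e_def by simp
  have AF: "St b (h*b+e) < r \<and> r \<le> St b (Suc (h*b+e))"
    using arith_final[OF assms(1) eb Hh ke] assms(5,8,9) H_def by blast
  have "t = h*b+e"
  proof (rule ccontr)
    assume "t \<noteq> h*b+e"
    then consider "Suc t \<le> h*b+e" | "Suc (h*b+e) \<le> t" by linarith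
    then show False
    proof cases
      case 1 then have "St b (Suc t) \<le> St b (h*b+e)" by (simp add: strict_mono_less_eq[OF St_strict])
      then show False using Stt AF by linarith
    next
      case 2 then have "St b (Suc (h*b+e)) \<le> St b t" by (simp add: strict_mono_less_eq[OF St_strict])
      then show False using Stt AF by linarith
    qed
  qed
  have "M \<inter> {m..<m+a+b} = {m..m+t}" using t(2) unfolding shadow_def .
  then have "card (M \<inter> {m..<m+a+b}) = t + 1" by simp
  then show ?thesis using \<open>t = h*b+e\<close> Hh ke H_def by (simp add: algebra_simps)
qed


end
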